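(* Every finite frame $(X,R)$ that is the image of the frame $(\mathbb{R},R_{>1})$ under a surjective p-morphism has small anti-clique overlaps.
   Context: $(\mathbb{R},R_{>1})$ is the frame with $xR_{>1}y$ iff $|x-y|>1$. A p-morphism $f:(Y,S)\to(X,R)$ is a map such that $ySy'$ implies $f(y)Rf(y')$, and whenever $f(y)Rx'$ there is $y'$ with $ySy'$ and $f(y')=x'$. An anti-clique in $(X,R)$ is a subset $\Sigma$ such that $xRy$ holds for no $x,y\in\Sigma$; a maximal anti-clique is one not properly contained in another anti-clique. $(X,R)$ has small anti-clique overlaps if any two distinct maximal anti-cliques have at most one element in common. *)

theory Defs
  imports Complex_Main
begin

definition R_gt1 :: "real \<Rightarrow> real \<Rightarrow> bool" where
  "R_gt1 x y \<longleftrightarrow> \<bar>x - y\<bar> > 1"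

definition p_morphism ::
  "'b set \<Rightarrow> ('b \<Rightarrow> 'b \<Rightarrow> bool) \<Rightarrow> 'a set \<Rightarrow> ('a \<Rightarrow> 'a \<Rightarrow> bool) \<Rightarrow> ('b \<Rightarrow> 'a) \<Rightarrow> bool" where
  "p_morphism Y S X R f \<longleftrightarrow>
     (\<forall>y\<in>Y. f y \<in> X) \<and>
     (\<forall>y\<in>Y. \<forall>y'\<in>Y. S y y' \<longrightarrow> R (f y) (f y')) \<and>
     (\<forall>y\<in>Y. \<forall>x'\<in>X. R (f y) x' \<longrightarrow> (\<exists>y'\<in>Y. S y y' \<and> f y' = x'))"

definition anti_clique :: "'a set \<Rightarrow> ('a \<Rightarrow> 'a \<Rightarrow> bool) \<Rightarrow> 'a set \<Rightarrow> bool" where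
  "anti_clique X R \<Sigma> \<longleftrightarrow> \<Sigma> \<subseteq> X \<and> (\<forall>x\<in>\<Sigma>. \<forall>y\<in>\<Sigma>. \<not> R x y)"

definition max_anti_clique :: "'a set \<Rightarrow> ('a \<Rightarrow> 'a \<Rightarrow> bool) \<Rightarrow> 'a set \<Rightarrow> bool" where
  "max_anti_clique X R \<Sigma> \<longleftrightarrow> anti_clique X R \<Sigma> \<and>
     (\<forall>\<Sigma>'. anti_clique X R \<Sigma>' \<and> \<Sigma> \<subseteq> \<Sigma>' \<longrightarrow> \<Sigma>' = \<Sigma>)"

definition small_anti_clique_overlaps :: "'a set \<Rightarrow> ('a \<Rightarrow> 'a \<Rightarrow> bool) \<Rightarrow> bool" where
  "small_anti_clique_overlaps X R \<longleftrightarrow>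
     (\<forall>\<Sigma>1 \<Sigma>2. max_anti_clique X R \<Sigma>1 \<and> max_anti_clique X R \<Sigma>2 \<and> \<Sigma>1 \<noteq> \<Sigma>2
        \<longrightarrow> card (\<Sigma>1 \<inter> \<Sigma>2) \<le> 1)"

end

theory Submission
  imports Defs
begin

definition win :: "(real \<Rightarrow> 'a) \<Rightarrow> real \<Rightarrow> bool" where
  "win f \<alpha> \<longleftrightarrow> (\<forall>s s'. \<alpha> \<le> s \<longrightarrow> s \<le> \<alpha> + 1 \<longrightarrow> f s' = f s \<longrightarrow> \<alpha> \<le> s' \<and> s' \<le> \<alpha> + 1)"

lemma step:
  fixes f :: "real \<Rightarrow> 'a"
  assumes cs: "\<And>y0 s s'. f s' = f s \<Longrightarrow> (\<forall>r. f r = f y0 \<longrightarrow> abs (s - r) \<le> 1)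
                 \<Longrightarrow> (\<forall>r. f r = f y0 \<longrightarrow> abs (s' - r) \<le> 1)"
    and wa: "win f a" and wb: "win f b" and ab: "a < b" and ba: "b < a + 1"
  shows "\<exists>y. win f (Inf {r. f r = f y}) \<and> b < Inf {r. f r = f y} \<and> Inf {r. f r = f y} < b + 1"
proof -
  define y where "y = (a + b) / 2 + 1"
  define P where "P = {r. f r = f y}"
  have ya: "a + 1 < y" and yb: "y < b + 1" and yb2: "b \<le> y"
    using ab ba unfolding y_def by (simp_all add: field_simps)
  have yP: "y \<in> P" unfolding P_def by simp
  have Pb: "b \<le> p \<and> p \<le> b + 1" if "p \<in> P" for p
  proof -
    have "b \<le> y" "y \<le> b + 1" using yb yb2 by auto
    moreover have "f p = f y" using that unfolding P_def by simp
    ultimately show ?thesis using wb unfolding win_def by blast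
  qed
  have Pa: "a + 1 < p" if "p \<in> P" for p
  proof (rule ccontr)
    assume "\<not> a + 1 < p"
    then have "a \<le> p" "p \<le> a + 1" using Pb[OF that] ab by auto
    moreover have "f y = f p" using that unfolding P_def by simp
    ultimately have "y \<le> a + 1" using wa unfolding win_def by blast
    then show False using ya by simp
  qed
  define \<beta> where "\<beta> = Inf P"
  have bdd: "bdd_below P" using Pa by (meson bdd_below.I less_imp_le)
  have bl: "\<beta> \<le> p" if "p \<in> P" for p using cInf_lower[OF that bdd] \<beta>_def by simp
  have bg: "a + 1 \<le> \<beta>" unfolding \<beta>_def using yP Pa
    by (metis cInf_greatest empty_iff less_imp_le)
  have by': "\<beta> \<le> y" using bl yP by simp
  have bb1: "\<beta> < b + 1" using by' yb by simp
  have up: "s \<le> \<beta> + 1" if "\<forall>r\<in>P. abs (s - r) \<le> 1" for s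
  proof -
    have "s - 1 \<le> \<beta>" unfolding \<beta>_def
      using yP that by (intro cInf_greatest) (auto simp: abs_le_iff)
    then show ?thesis by simp
  qed
  have c1: "\<forall>r. f r = f y \<longrightarrow> abs (\<beta> + 1 - r) \<le> 1"
  proof (intro allI impI)
    fix r assume "f r = f y"
    then have "r \<in> P" unfolding P_def by simp
    then have "\<beta> \<le> r" "r \<le> b + 1" using bl Pb by auto
    then show "abs (\<beta> + 1 - r) \<le> 1" using bg ab ba by (simp add: abs_le_iff)
  qed
  have Fw: "b + 1 < r \<and> r \<le> \<beta> + 1" if "f r = f (\<beta> + 1)" for r
  proof -
    have cr: "\<forall>r'. f r' = f y \<longrightarrow> abs (r - r') \<le> 1" using cs[OF that c1] .
    then have "r \<le> \<beta> + 1" using up unfolding P_def by auto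
    moreover have "y - 1 \<le> r" using cr[rule_format, of y] by (simp add: abs_le_iff)
    then have "a < r" using ya by simp
    moreover have "\<not> (r \<le> b + 1)"
    proof
      assume h: "r \<le> b + 1"
      show False
      proof (cases "r \<le> a + 1")
        case True
        have "f (\<beta> + 1) = f r" using that by simp
        then have "\<beta> + 1 \<le> a + 1" using wa[unfolded win_def, rule_format, of r "\<beta> + 1"] True \<open>a < r\<close> by simp
        then show False using bg by simp
      next
        case False
        then have "b \<le> r" using ba by simp
        have "f (\<beta> + 1) = f r" using that by simp
        then have "\<beta> + 1 \<le> b + 1" using wb[unfolded win_def, rule_format, of r "\<beta> + 1"] h \<open>b \<le> r\<close> by simp
        then show False using bg ab ba by simp
      qed
    qed
    ultimately show ?thesis by simp
  qed
  have "win f \<beta>" unfolding win_def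
  proof (intro allI impI)
    fix s s' assume s1: "\<beta> \<le> s" and s2: "s \<le> \<beta> + 1" and ss: "f s' = f s"
    have "\<forall>r. f r = f y \<longrightarrow> abs (s - r) \<le> 1"
    proof (intro allI impI)
      fix r assume "f r = f y"
      then have "r \<in> P" unfolding P_def by simp
      then show "abs (s - r) \<le> 1" using bl[of r] Pb[of r] s1 s2 bg ab ba by (auto simp: abs_le_iff)
    qed
    from cs[OF ss this] have "s' \<le> \<beta> + 1" using up unfolding P_def by auto
    moreover have "\<forall>r. f r = f (\<beta> + 1) \<longrightarrow> abs (s - r) \<le> 1"
    proof (intro allI impI)
      fix r assume "f r = f (\<beta> + 1)"
      from Fw[OF this] show "abs (s - r) \<le> 1" using s1 s2 bg ab ba bb1 by (auto simp: abs_le_iff)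
    qed
    from cs[OF ss this] have "abs (s' - (\<beta> + 1)) \<le> 1" by simp
    then have "\<beta> \<le> s'" by (simp add: abs_le_iff)
    ultimately show "\<beta> \<le> s' \<and> s' \<le> \<beta> + 1" by simp
  qed
  moreover have "b < \<beta>" using bg ba by simp
  moreover have "\<beta> < b + 1" using by' yb by simp
  ultimately show ?thesis unfolding \<beta>_def P_def by blast
qed

lemma no_scenario:
  fixes f :: "real \<Rightarrow> 'a"
  assumes cs: "\<And>y0 s s'. f s' = f s \<Longrightarrow> (\<forall>r. f r = f y0 \<longrightarrow> abs (s - r) \<le> 1)
                 \<Longrightarrow> (\<forall>r. f r = f y0 \<longrightarrow> abs (s' - r) \<le> 1)"
    and fin: "finite X" and rng: "\<And>y. f y \<in> X"
    and wa: "win f a" and wb: "win f b" and ab: "a < b" and ba: "b < a + 1"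
  shows False
proof -
  define S where "S = (\<lambda>w. Inf {r. f r = w}) ` X"
  define Q where "Q = {\<beta> \<in> S. \<exists>a. win f a \<and> win f \<beta> \<and> a < \<beta> \<and> \<beta> < a + 1}"
  have fQ: "finite Q" unfolding Q_def S_def using fin by simp
  have inQ: "Inf {r. f r = f y} \<in> Q" if "win f c" "win f (Inf {r. f r = f y})"
    "c < Inf {r. f r = f y}" "Inf {r. f r = f y} < c + 1" for c y
  proof -
    have "Inf {r. f r = f y} \<in> S" unfolding S_def using rng by blast
    then show ?thesis unfolding Q_def using that by blast
  qed
  obtain y where y: "win f (Inf {r. f r = f y})" "b < Inf {r. f r = f y}" "Inf {r. f r = f y} < b + 1"
    using step[OF _ wa wb ab ba] cs by blast
  have "Inf {r. f r = f y} \<in> Q" using inQ[OF wb y] .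
  then have ne: "Q \<noteq> {}" by blast
  define m where "m = Max Q"
  have mQ: "m \<in> Q" unfolding m_def using fQ ne by simp
  then obtain c where c: "win f c" "win f m" "c < m" "m < c + 1" unfolding Q_def by blast
  obtain y' where y': "win f (Inf {r. f r = f y'})" "m < Inf {r. f r = f y'}" "Inf {r. f r = f y'} < m + 1"
    using step[OF _ c(1) c(2) c(3) c(4)] cs by blast
  have "Inf {r. f r = f y'} \<in> Q" using inQ[OF c(2) y'] .
  then have "Inf {r. f r = f y'} \<le> m" unfolding m_def using fQ by simp
  then show False using y'(2) by simp
qed

lemma cs_from:
  assumes pm: "p_morphism UNIV R_gt1 X R f"
    and ss: "f s' = f s" and h: "\<forall>r. f r = f y0 \<longrightarrow> abs (s - r) \<le> 1"
  shows "\<forall>r. f r = f y0 \<longrightarrow> abs (s' - r) \<le> 1"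
proof (intro allI impI)
  fix r assume fr: "f r = f y0"
  show "abs (s' - r) \<le> 1"
  proof (rule ccontr)
    assume "\<not> abs (s' - r) \<le> 1"
    then have "R_gt1 s' r" unfolding R_gt1_def by simp
    then have "R (f s') (f r)" using pm unfolding p_morphism_def by blast
    then have "R (f s) (f y0)" using ss fr by simp
    moreover have "f y0 \<in> X" using pm unfolding p_morphism_def by blast
    ultimately obtain y' where "R_gt1 s y'" "f y' = f y0" using pm unfolding p_morphism_def by blast
    then show False using h unfolding R_gt1_def by force
  qed
qed

lemma ac_iff:
  assumes pm: "p_morphism UNIV R_gt1 X R f" and su: "f ` UNIV = X"
  shows "anti_clique X R \<Sigma> \<longleftrightarrow> \<Sigma> \<subseteq> X \<and> (\<forall>y y'. f y \<in> \<Sigma> \<longrightarrow> f y' \<in> \<Sigma> \<longrightarrow> abs (y - y') \<le> 1)"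
proof
  assume ac: "anti_clique X R \<Sigma>"
  show "\<Sigma> \<subseteq> X \<and> (\<forall>y y'. f y \<in> \<Sigma> \<longrightarrow> f y' \<in> \<Sigma> \<longrightarrow> abs (y - y') \<le> 1)"
  proof (intro conjI allI impI)
    show "\<Sigma> \<subseteq> X" using ac unfolding anti_clique_def by simp
    fix y y' assume "f y \<in> \<Sigma>" "f y' \<in> \<Sigma>"
    then have "\<not> R (f y) (f y')" using ac unfolding anti_clique_def by blast
    then have "\<not> R_gt1 y y'" using pm unfolding p_morphism_def by blast
    then show "abs (y - y') \<le> 1" unfolding R_gt1_def by simp
  qed
next
  assume h: "\<Sigma> \<subseteq> X \<and> (\<forall>y y'. f y \<in> \<Sigma> \<longrightarrow> f y' \<in> \<Sigma> \<longrightarrow> abs (y - y') \<le> 1)"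
  show "anti_clique X R \<Sigma>" unfolding anti_clique_def
  proof (intro conjI ballI notI)
    show "\<Sigma> \<subseteq> X" using h by simp
    fix x x' assume x: "x \<in> \<Sigma>" and x': "x' \<in> \<Sigma>" and r: "R x x'"
    obtain y where y: "f y = x" using x h su by blast
    have "x' \<in> X" using x' h by blast
    then obtain y' where "R_gt1 y y'" "f y' = x'" using pm r y unfolding p_morphism_def by blast
    then show False using h x x' y unfolding R_gt1_def by force
  qed
qed

lemma diam_facts:
  fixes A :: "real set"
  assumes p0: "p0 \<in> A" and d: "\<forall>p\<in>A. \<forall>q\<in>A. abs (p - q) \<le> 1"
  shows "bdd_below A" "bdd_above A" "Sup A \<le> Inf A + 1"
    "\<And>p. p \<in> A \<Longrightarrow> Inf A \<le> p" "\<And>p. p \<in> A \<Longrightarrow> p \<le> Sup A"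
proof -
  show bb: "bdd_below A" using p0 d by (intro bdd_below.I[of _ "p0 - 1"]) (force simp: abs_le_iff)
  show ba: "bdd_above A" using p0 d by (intro bdd_above.I[of _ "p0 + 1"]) (force simp: abs_le_iff)
  show "\<And>p. p \<in> A \<Longrightarrow> Inf A \<le> p" using bb by (simp add: cInf_lower)
  show "\<And>p. p \<in> A \<Longrightarrow> p \<le> Sup A" using ba by (simp add: cSup_upper)
  have "p - 1 \<le> Inf A" if pA: "p \<in> A" for p
  proof (rule cInf_greatest)
    show "A \<noteq> {}" using p0 by blast
    fix x assume "x \<in> A" then have "abs (p - x) \<le> 1" using d pA by blast
    then show "p - 1 \<le> x" by (simp add: abs_le_iff)
  qed
  then have "\<And>p. p \<in> A \<Longrightarrow> p \<le> Inf A + 1" by force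
  then show "Sup A \<le> Inf A + 1" using p0 by (intro cSup_least) auto
qed

lemma near:
  fixes A :: "real set"
  assumes p0: "p0 \<in> A" and d: "\<forall>p\<in>A. abs (s - p) \<le> 1"
  shows "s \<le> Inf A + 1" "Sup A - 1 \<le> s"
proof -
  have "s - 1 \<le> Inf A" using p0 d by (intro cInf_greatest) (auto simp: abs_le_iff)
  then show "s \<le> Inf A + 1" by simp
  have "Sup A \<le> s + 1" using p0 d by (intro cSup_least) (auto simp: abs_le_iff)
  then show "Sup A - 1 \<le> s" by simp
qed

lemma win_of:
  fixes f :: "real \<Rightarrow> 'a"
  assumes cs: "\<And>y0 s s'. f s' = f s \<Longrightarrow> (\<forall>r. f r = f y0 \<longrightarrow> abs (s - r) \<le> 1)
                 \<Longrightarrow> (\<forall>r. f r = f y0 \<longrightarrow> abs (s' - r) \<le> 1)"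
    and A: "A = {r. f r \<in> \<Sigma>}" and p0: "p0 \<in> A" and d: "\<forall>p\<in>A. \<forall>q\<in>A. abs (p - q) \<le> 1"
    and eq: "Sup A = Inf A + 1"
  shows "win f (Inf A)"
  unfolding win_def
proof (intro allI impI)
  fix s s' assume s1: "Inf A \<le> s" and s2: "s \<le> Inf A + 1" and ss: "f s' = f s"
  have "abs (s' - p) \<le> 1" if pA: "p \<in> A" for p
  proof -
    have "\<forall>r. f r = f p \<longrightarrow> abs (s - r) \<le> 1"
    proof (intro allI impI)
      fix r assume "f r = f p"
      then have "r \<in> A" using pA A by simp
      then show "abs (s - r) \<le> 1" using diam_facts(4,5)[OF p0 d, of r] s1 s2 eq by (simp add: abs_le_iff)
    qed
    from cs[OF ss this] show ?thesis by simp
  qed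
  then have "\<forall>p\<in>A. abs (s' - p) \<le> 1" by blast
  from near[OF p0 this] eq show "Inf A \<le> s' \<and> s' \<le> Inf A + 1" by simp
qed

lemma extend:
  assumes pm: "p_morphism UNIV R_gt1 X R f" and su: "f ` UNIV = X"
    and m: "max_anti_clique X R \<Sigma>"
    and T: "\<And>r p. f r = f s \<Longrightarrow> f p \<in> \<Sigma> \<Longrightarrow> abs (r - p) \<le> 1"
    and D: "\<And>r r'. f r = f s \<Longrightarrow> f r' = f s \<Longrightarrow> abs (r - r') \<le> 1"
  shows "f s \<in> \<Sigma>"
proof -
  have ac: "anti_clique X R \<Sigma>" using m unfolding max_anti_clique_def by simp
  then have acs: "\<Sigma> \<subseteq> X" "\<forall>y y'. f y \<in> \<Sigma> \<longrightarrow> f y' \<in> \<Sigma> \<longrightarrow> abs (y - y') \<le> 1"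
    using ac_iff[OF pm su] by auto
  have "anti_clique X R (insert (f s) \<Sigma>)"
    unfolding ac_iff[OF pm su]
  proof (intro conjI allI impI)
    show "insert (f s) \<Sigma> \<subseteq> X" using acs su by blast
    fix y y' assume y: "f y \<in> insert (f s) \<Sigma>" and y': "f y' \<in> insert (f s) \<Sigma>"
    show "abs (y - y') \<le> 1"
    proof (cases "f y = f s")
      case True
      show ?thesis
      proof (cases "f y' = f s")
        case True2: True
        show ?thesis using D[OF True True2] .
      next
        case False
        then show ?thesis using T[OF True] y' by auto
      qed
    next
      case False
      then have fy: "f y \<in> \<Sigma>" using y by simp
      show ?thesis
      proof (cases "f y' = f s")
        case True
        then show ?thesis using T[OF True fy] by (simp add: abs_minus_commute)
      next
        case False
        then show ?thesis using acs fy y' by auto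
      qed
    qed
  qed
  then have "insert (f s) \<Sigma> = \<Sigma>" using m unfolding max_anti_clique_def by blast
  then show ?thesis by blast
qed

lemma init:
  assumes pm: "p_morphism UNIV R_gt1 X R f" and su: "f ` UNIV = X"
    and m1: "max_anti_clique X R \<Sigma>1" and m2: "max_anti_clique X R \<Sigma>2"
    and x1: "x \<in> \<Sigma>1" and x2: "x \<in> \<Sigma>2" and z1: "z \<in> \<Sigma>1" and z2: "z \<in> \<Sigma>2"
    and xz: "x \<noteq> z"
    and y: "f y \<in> \<Sigma>1" and y': "f y' \<in> \<Sigma>2" and yy: "y + 1 < y'"
  shows "\<exists>a b. win f a \<and> win f b \<and> a < b \<and> b < a + 1"
proof -
  note cs = cs_from[OF pm]
  define A where "A = {r. f r \<in> \<Sigma>1}"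
  define B where "B = {r. f r \<in> \<Sigma>2}"
  have ac1: "anti_clique X R \<Sigma>1" using m1 unfolding max_anti_clique_def by simp
  have ac2: "anti_clique X R \<Sigma>2" using m2 unfolding max_anti_clique_def by simp
  have dA: "\<forall>p\<in>A. \<forall>q\<in>A. abs (p - q) \<le> 1" using ac1 ac_iff[OF pm su] unfolding A_def by auto
  have dB: "\<forall>p\<in>B. \<forall>q\<in>B. abs (p - q) \<le> 1" using ac2 ac_iff[OF pm su] unfolding B_def by auto
  have yA: "y \<in> A" using y unfolding A_def by simp
  have yB: "y' \<in> B" using y' unfolding B_def by simp
  obtain px where px: "f px = x" using x1 ac1 su unfolding anti_clique_def by blast
  obtain pz where pz: "f pz = z" using z1 ac1 su unfolding anti_clique_def by blast
  have pxA: "px \<in> A" "px \<in> B" using px x1 x2 unfolding A_def B_def by auto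
  have pzA: "pz \<in> A" "pz \<in> B" using pz z1 z2 unfolding A_def B_def by auto
  have pxz: "px \<noteq> pz" using px pz xz by blast
  define a0 where "a0 = Inf A"
  define a1 where "a1 = Sup A"
  define b0 where "b0 = Inf B"
  define b1 where "b1 = Sup B"
  note FA = diam_facts[OF yA dA, folded a0_def a1_def]
  note FB = diam_facts[OF yB dB, folded b0_def b1_def]
  have ya0: "a0 \<le> y" using FA(4)[OF yA] .
  have yb1: "y' \<le> b1" using FB(5)[OF yB] .
  have pxle: "px \<le> a0 + 1" using near(1)[OF yA, of px] dA pxA unfolding a0_def by blast
  have pxge: "b1 - 1 \<le> px" using near(2)[OF yB, of px] dB pxA unfolding b1_def by blast
  have MLx: "f s \<in> \<Sigma>1 \<and> f s \<in> \<Sigma>2" if T: "\<And>p. f p \<in> \<Sigma>1 \<or> f p \<in> \<Sigma>2 \<Longrightarrow> abs (s - p) \<le> 1" for s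
  proof -
    have Tr: "abs (r - p) \<le> 1" if fr: "f r = f s" and fp: "f p \<in> \<Sigma>1 \<or> f p \<in> \<Sigma>2" for r p
    proof -
      have "\<forall>r'. f r' = f p \<longrightarrow> abs (s - r') \<le> 1" using T fp by auto
      from cs[OF fr this] show ?thesis by simp
    qed
    have bnd: "b1 - 1 \<le> r \<and> r \<le> a0 + 1" if fr: "f r = f s" for r
    proof -
      have "\<forall>p\<in>A. abs (r - p) \<le> 1" using Tr[OF fr] unfolding A_def by auto
      then have "r \<le> a0 + 1" using near(1)[OF yA] unfolding a0_def by blast
      moreover have "\<forall>p\<in>B. abs (r - p) \<le> 1" using Tr[OF fr] unfolding B_def by auto
      then have "b1 - 1 \<le> r" using near(2)[OF yB] unfolding b1_def by blast
      ultimately show ?thesis by simp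
    qed
    have D: "abs (r - r') \<le> 1" if "f r = f s" "f r' = f s" for r r'
      using bnd[OF that(1)] bnd[OF that(2)] ya0 yb1 yy by (simp add: abs_le_iff)
    have "f s \<in> \<Sigma>1" using extend[OF pm su m1, of s] Tr D by blast
    moreover have "f s \<in> \<Sigma>2" using extend[OF pm su m2, of s] Tr D by blast
    ultimately show ?thesis by simp
  qed
  have "f (a0 + 1) \<in> \<Sigma>1 \<and> f (a0 + 1) \<in> \<Sigma>2"
  proof (rule MLx)
    fix p assume "f p \<in> \<Sigma>1 \<or> f p \<in> \<Sigma>2"
    then show "abs (a0 + 1 - p) \<le> 1"
    proof
      assume "f p \<in> \<Sigma>1"
      then have "p \<in> A" unfolding A_def by simp
      then show ?thesis using FA(3) FA(4)[of p] FA(5)[of p] by (simp add: abs_le_iff)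
    next
      assume "f p \<in> \<Sigma>2"
      then have pB: "p \<in> B" unfolding B_def by simp
      have "abs (p - px) \<le> 1" using dB pB pxA by blast
      then show ?thesis using FB(3) FB(4)[OF pB] pxle ya0 yb1 yy by (simp add: abs_le_iff)
    qed
  qed
  then have "a0 + 1 \<in> A" unfolding A_def by simp
  then have a1eq: "a1 = a0 + 1" using FA(3) FA(5) by force
  have "f (b1 - 1) \<in> \<Sigma>1 \<and> f (b1 - 1) \<in> \<Sigma>2"
  proof (rule MLx)
    fix p assume "f p \<in> \<Sigma>1 \<or> f p \<in> \<Sigma>2"
    then show "abs (b1 - 1 - p) \<le> 1"
    proof
      assume "f p \<in> \<Sigma>2"
      then have "p \<in> B" unfolding B_def by simp
      then show ?thesis using FB(3) FB(4)[of p] FB(5)[of p] by (simp add: abs_le_iff)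
    next
      assume "f p \<in> \<Sigma>1"
      then have pA: "p \<in> A" unfolding A_def by simp
      have "abs (p - px) \<le> 1" using dA pA pxA by blast
      then show ?thesis using FA(3) FA(5)[OF pA] pxge ya0 yb1 yy by (simp add: abs_le_iff)
    qed
  qed
  then have "b1 - 1 \<in> B" unfolding B_def by simp
  then have b0eq: "b1 = b0 + 1" using FB(3) FB(4) by force
  have wA: "win f a0" unfolding a0_def
    apply (rule win_of[OF _ A_def yA dA])
     apply (erule cs, assumption)
    using a1eq unfolding a0_def a1_def by simp
  have wB: "win f b0" unfolding b0_def
    apply (rule win_of[OF _ B_def yB dB])
     apply (erule cs, assumption)
    using b0eq unfolding b0_def b1_def by simp
  have "a0 < b0" using ya0 yb1 yy b0eq by simp
  moreover have "b0 < a0 + 1"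
  proof (rule ccontr)
    assume "\<not> b0 < a0 + 1"
    then have "px = b0" "pz = b0"
      using FB(4)[OF pxA(2)] FB(4)[OF pzA(2)] FA(5)[OF pxA(1)] FA(5)[OF pzA(1)] a1eq by auto
    then show False using pxz by simp
  qed
  ultimately show ?thesis using wA wB by blast
qed

theorem lemma5p7:
  fixes X :: "'a set" and R :: "'a \<Rightarrow> 'a \<Rightarrow> bool" and f :: "real \<Rightarrow> 'a"
  assumes "finite X"
    and "p_morphism UNIV R_gt1 X R f"
    and "f ` UNIV = X"
  shows "small_anti_clique_overlaps X R"
  unfolding small_anti_clique_overlaps_def
proof (intro allI impI, elim conjE)
  fix \<Sigma>1 \<Sigma>2
  assume m1: "max_anti_clique X R \<Sigma>1" and m2: "max_anti_clique X R \<Sigma>2" and ne: "\<Sigma>1 \<noteq> \<Sigma>2"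
  note pm = assms(2) and su = assms(3)
  note cs = cs_from[OF pm]
  have rng: "f y \<in> X" for y using su by blast
  have ac1: "anti_clique X R \<Sigma>1" using m1 unfolding max_anti_clique_def by simp
  have ac2: "anti_clique X R \<Sigma>2" using m2 unfolding max_anti_clique_def by simp
  have fin: "finite (\<Sigma>1 \<inter> \<Sigma>2)" using ac1 assms(1) unfolding anti_clique_def
    by (meson finite_Int finite_subset)
  show "card (\<Sigma>1 \<inter> \<Sigma>2) \<le> 1"
  proof (rule ccontr)
    assume "\<not> card (\<Sigma>1 \<inter> \<Sigma>2) \<le> 1"
    then obtain x z where xz: "x \<in> \<Sigma>1 \<inter> \<Sigma>2" "z \<in> \<Sigma>1 \<inter> \<Sigma>2" "x \<noteq> z"
      using card_le_Suc0_iff_eq[OF fin] by auto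
    have "\<not> anti_clique X R (\<Sigma>1 \<union> \<Sigma>2)"
    proof
      assume "anti_clique X R (\<Sigma>1 \<union> \<Sigma>2)"
      then have "\<Sigma>1 \<union> \<Sigma>2 = \<Sigma>1" "\<Sigma>1 \<union> \<Sigma>2 = \<Sigma>2"
        using m1 m2 unfolding max_anti_clique_def by auto
      then show False using ne by simp
    qed
    moreover have "\<Sigma>1 \<union> \<Sigma>2 \<subseteq> X" using ac1 ac2 unfolding anti_clique_def by simp
    ultimately obtain y y' where yy: "f y \<in> \<Sigma>1 \<union> \<Sigma>2" "f y' \<in> \<Sigma>1 \<union> \<Sigma>2" "\<not> abs (y - y') \<le> 1"
      unfolding ac_iff[OF pm su] by blast
    have d1: "abs (p - q) \<le> 1" if "f p \<in> \<Sigma>1" "f q \<in> \<Sigma>1" for p q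
      using ac1 that unfolding ac_iff[OF pm su] by blast
    have d2: "abs (p - q) \<le> 1" if "f p \<in> \<Sigma>2" "f q \<in> \<Sigma>2" for p q
      using ac2 that unfolding ac_iff[OF pm su] by blast
    obtain u v where uv: "f u \<in> \<Sigma>1" "f v \<in> \<Sigma>2" "\<not> abs (u - v) \<le> 1"
    proof (cases "f y \<in> \<Sigma>1")
      case True
      then have "f y' \<in> \<Sigma>2" using d1[OF True] yy by auto
      then show ?thesis using that True yy by blast
    next
      case False
      then have "f y \<in> \<Sigma>2" "f y' \<in> \<Sigma>1" using yy d2 by auto
      then show ?thesis using that yy by (metis abs_minus_commute)
    qed
    have "\<exists>a b. win f a \<and> win f b \<and> a < b \<and> b < a + 1"
    proof (cases "u + 1 < v")
      case True
      then show ?thesis using init[OF pm su m1 m2 _ _ _ _ xz(3) uv(1) uv(2)] xz by blast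
    next
      case False
      then have "v + 1 < u" using uv(3) by (simp add: abs_le_iff)
      then show ?thesis using init[OF pm su m2 m1 _ _ _ _ xz(3) uv(2) uv(1)] xz by blast
    qed
    then obtain a b where w: "win f a" "win f b" "a < b" "b < a + 1" by blast
    show False
      by (rule no_scenario[OF _ assms(1) rng w(1) w(2) w(3) w(4)]) (erule cs_from[OF pm], assumption)
  qed
qed

end
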